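(* Let $f(z)=z+\sum_{n=2}^{\infty}a_nz^n$ belong to the class $\mathcal{S}_u^*$, and let $f^{-1}(w)=w+A_2w^2+A_3w^3+A_4w^4+\cdots$ be the inverse function of $f$ near $w=0$. Then $$|A_2A_4-A_3^2|\le\frac5{12},$$ and the estimate is sharp, i.e. there exists a function $f\in\mathcal{S}_u^*$ for which equality holds.
   Context: $\mathbb{D}=\{z\in\mathbb{C}:|z|<1\}$. The class $\mathcal{S}_u^*$ consists of all analytic functions $f$ on $\mathbb{D}$ with $f(0)=0$, $f'(0)=1$ satisfying $\left|\frac{zf'(z)}{f(z)}-1\right|<1$ for all $z\in\mathbb{D}$; such functions are univalent, so $f^{-1}$ exists at least on $\{|w|<1/4\}$. One has $A_2=-a_2$, $A_3=-a_3+2a_2^2$, $A_4=-a_4+5a_2a_3-5a_2^3$, so $A_2A_4-A_3^2=a_2a_4-a_2^2a_3+a_2^4-a_3^2$ (denoted $H_{2,2}(f^{-1})$). *)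

theory Defs
  imports "HOL-Analysis.Analysis"
begin

text \<open>At z = 0 the quotient is understood as its
  removable value 1, so the condition is imposed for z \<noteq> 0.\<close>
definition Su_star :: "(complex \<Rightarrow> complex) \<Rightarrow> bool" where
  "Su_star f \<longleftrightarrow> f holomorphic_on ball 0 1 \<and> f 0 = 0 \<and> deriv f 0 = 1 \<and>
     (\<forall>z\<in>ball 0 1. z \<noteq> 0 \<longrightarrow> cmod (z * deriv f z / f z - 1) < 1)"

definition tcoeff :: "(complex \<Rightarrow> complex) \<Rightarrow> nat \<Rightarrow> complex" where
  "tcoeff g n = (deriv ^^ n) g 0 / of_nat (fact n)"

definition local_inverse :: "(complex \<Rightarrow> complex) \<Rightarrow> (complex \<Rightarrow> complex) \<Rightarrow> real \<Rightarrow> bool" where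
  "local_inverse f g r \<longleftrightarrow> r > 0 \<and> g holomorphic_on ball 0 r \<and> g 0 = 0 \<and>
     g ` ball 0 r \<subseteq> ball 0 1 \<and> (\<forall>w\<in>ball 0 r. f (g w) = w)"

end

theory Submission
  imports Defs "HOL-Complex_Analysis.Complex_Analysis"
begin


lemma zero_deriv_on_ball:
  fixes E :: "complex \<Rightarrow> complex"
  assumes "\<And>w. w \<in> ball 0 r \<Longrightarrow> E w = 0" "w \<in> ball 0 r" "(E has_field_derivative E') (at w)"
  shows "E' = 0"
proof -
  have "((\<lambda>_. 0) has_field_derivative E') (at w)"
    using has_field_derivative_transform_within_open[OF assms(3), of "ball 0 r" "\<lambda>_. 0"] assms by auto
  then show ?thesis using DERIV_const DERIV_unique by blast
qed

lemma inverse_derivs: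
  fixes f g :: "complex \<Rightarrow> complex"
  assumes holf: "f holomorphic_on ball 0 1" and f1: "deriv f 0 = 1" and li: "local_inverse f g r"
  shows "deriv g 0 = 1"
    "(deriv^^2) f 0 + (deriv^^2) g 0 = 0"
    "(deriv^^3) f 0 + 3 * (deriv^^2) f 0 * (deriv^^2) g 0 + (deriv^^3) g 0 = 0"
    "(deriv^^4) f 0 + 6 * (deriv^^3) f 0 * (deriv^^2) g 0 + 3 * (deriv^^2) f 0 * ((deriv^^2) g 0)^2
      + 4 * (deriv^^2) f 0 * (deriv^^3) g 0 + (deriv^^4) g 0 = 0"
proof -
  from li have r: "r > 0" and holg: "g holomorphic_on ball 0 r" and g0: "g 0 = 0"
    and gim: "g ` ball 0 r \<subseteq> ball 0 1" and fg: "\<And>w. w \<in> ball 0 r \<Longrightarrow> f (g w) = w"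
    unfolding local_inverse_def by auto
  define F where "F k w = (deriv^^k) f (g w)" for k w
  define G where "G k w = (deriv^^k) g w" for k w
  have dF: "((\<lambda>w. F k w) has_field_derivative F (Suc k) w * G 1 w) (at w)" if "w \<in> ball 0 r" for k w
  proof -
    have "((deriv^^k) f has_field_derivative (deriv^^Suc k) f (g w)) (at (g w))"
    proof -
      have "g w \<in> ball 0 1" using gim that by blast
      then show ?thesis using has_field_derivative_higher_deriv[OF holf open_ball] by blast
    qed
    moreover have "(g has_field_derivative deriv g w) (at w)"
      using holomorphic_derivI[OF holg] that by auto
    ultimately show ?thesis using DERIV_chain[of "(deriv^^k) f" "(deriv^^Suc k) f (g w)" g w]
      by (simp add: F_def G_def o_def)
  qed
  have dG: "((\<lambda>w. G k w) has_field_derivative G (Suc k) w) (at w)" if "w \<in> ball 0 r" for k w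
    using has_field_derivative_higher_deriv[OF holg, of w k] that by (simp add: G_def)
  have dF': "((\<lambda>w. F k w) has_field_derivative D) (at w)" if "w \<in> ball 0 r" "D = F (Suc k) w * G 1 w" for k w D
    using dF that by simp
  have dG': "((\<lambda>w. G k w) has_field_derivative D) (at w)" if "w \<in> ball 0 r" "D = G (Suc k) w" for k w D
    using dG that by simp
  have E1: "F 1 w * G 1 w - 1 = 0" if "w \<in> ball 0 r" for w
  proof (rule zero_deriv_on_ball[of r "\<lambda>w. F 0 w - w"])
    show "F 0 w - w = 0" if "w \<in> ball 0 r" for w using fg that by (simp add: F_def)
    show "w \<in> ball 0 r" by fact
    show "((\<lambda>w. F 0 w - w) has_field_derivative F 1 w * G 1 w - 1) (at w)"
      by (auto intro!: derivative_eq_intros dF' dG' that)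
  qed
  have E2: "F 2 w * G 1 w ^ 2 + F 1 w * G 2 w = 0" if "w \<in> ball 0 r" for w
  proof (rule zero_deriv_on_ball[of r "\<lambda>w. F 1 w * G 1 w - 1"])
    show "F 1 w * G 1 w - 1 = 0" if "w \<in> ball 0 r" for w using E1 that by simp
    show "w \<in> ball 0 r" by fact
    show "((\<lambda>w. F 1 w * G 1 w - 1) has_field_derivative F 2 w * G 1 w ^ 2 + F 1 w * G 2 w) (at w)"
      by (auto intro!: derivative_eq_intros dF' dG' that simp: numeral_2_eq_2 power2_eq_square)
  qed
  have E3: "F 3 w * G 1 w ^ 3 + 3 * F 2 w * G 1 w * G 2 w + F 1 w * G 3 w = 0" if "w \<in> ball 0 r" for w
  proof (rule zero_deriv_on_ball[of r "\<lambda>w. F 2 w * G 1 w ^ 2 + F 1 w * G 2 w"])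
    show "F 2 w * G 1 w ^ 2 + F 1 w * G 2 w = 0" if "w \<in> ball 0 r" for w using E2 that by simp
    show "w \<in> ball 0 r" by fact
    show "((\<lambda>w. F 2 w * G 1 w ^ 2 + F 1 w * G 2 w) has_field_derivative
        F 3 w * G 1 w ^ 3 + 3 * F 2 w * G 1 w * G 2 w + F 1 w * G 3 w) (at w)"
      by (auto intro!: derivative_eq_intros dF' dG' that simp: eval_nat_numeral algebra_simps)
  qed
  have E4: "F 4 w * G 1 w ^ 4 + 6 * F 3 w * G 1 w ^ 2 * G 2 w + 3 * F 2 w * G 2 w ^ 2
      + 4 * F 2 w * G 1 w * G 3 w + F 1 w * G 4 w = 0" if "w \<in> ball 0 r" for w
  proof (rule zero_deriv_on_ball[of r "\<lambda>w. F 3 w * G 1 w ^ 3 + 3 * F 2 w * G 1 w * G 2 w + F 1 w * G 3 w"])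
    show "F 3 w * G 1 w ^ 3 + 3 * F 2 w * G 1 w * G 2 w + F 1 w * G 3 w = 0" if "w \<in> ball 0 r" for w using E3 that by simp
    show "w \<in> ball 0 r" by fact
    show "((\<lambda>w. F 3 w * G 1 w ^ 3 + 3 * F 2 w * G 1 w * G 2 w + F 1 w * G 3 w) has_field_derivative
        F 4 w * G 1 w ^ 4 + 6 * F 3 w * G 1 w ^ 2 * G 2 w + 3 * F 2 w * G 2 w ^ 2
      + 4 * F 2 w * G 1 w * G 3 w + F 1 w * G 4 w) (at w)"
      by (auto intro!: derivative_eq_intros dF' dG' that simp: eval_nat_numeral algebra_simps)
  qed
  have z: "0 \<in> ball (0::complex) r" using r by simp
  have F0: "F k 0 = (deriv^^k) f 0" for k by (simp add: F_def g0)
  have G1: "G 1 0 = 1" using E1[OF z] by (simp add: F0 f1)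
  show "deriv g 0 = 1" using G1 by (simp add: G_def)
  show "(deriv^^2) f 0 + (deriv^^2) g 0 = 0" using E2[OF z] G1 by (simp add: F0 f1 G_def)
  show "(deriv^^3) f 0 + 3 * (deriv^^2) f 0 * (deriv^^2) g 0 + (deriv^^3) g 0 = 0"
    using E3[OF z] G1 by (simp add: F0 f1 G_def)
  show "(deriv^^4) f 0 + 6 * (deriv^^3) f 0 * (deriv^^2) g 0 + 3 * (deriv^^2) f 0 * ((deriv^^2) g 0)^2
      + 4 * (deriv^^2) f 0 * (deriv^^3) g 0 + (deriv^^4) g 0 = 0"
    using E4[OF z] G1 by (simp add: F0 f1 G_def)
qed



lemma moebius_ident:
  fixes a c :: complex
  shows "(cmod (1 - cnj c * a))^2 - (cmod (a - c))^2 = (1 - (cmod a)^2) * (1 - (cmod c)^2)"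
  unfolding cmod_power2 by (simp add: algebra_simps power2_eq_square)

lemma hd_zmult:
  fixes h :: "complex \<Rightarrow> complex"
  assumes "h holomorphic_on ball 0 1"
  shows "(deriv^^Suc n) (\<lambda>z. z * h z) 0 = of_nat (Suc n) * (deriv^^n) h 0"
proof -
  have "(deriv^^Suc n) (\<lambda>z. z * h z) 0 =
     (\<Sum>i = 0..Suc n. of_nat (Suc n choose i) * (deriv ^^ i) (\<lambda>w. w) 0 * (deriv ^^ (Suc n - i)) h 0)"
    by (rule higher_deriv_mult[OF _ assms]) (auto intro: holomorphic_intros)
  also have "\<dots> = (\<Sum>i = 0..Suc n. if i = 1 then of_nat (Suc n) * (deriv ^^ n) h 0 else 0)"
    by (rule sum.cong) auto
  also have "\<dots> = of_nat (Suc n) * (deriv^^n) h 0"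
    by (subst sum.delta) auto
  finally show ?thesis .
qed




lemma wiener_strict:
  fixes p :: "complex \<Rightarrow> complex"
  assumes holp: "p holomorphic_on ball 0 1" and lt: "\<And>z. z \<in> ball 0 1 \<Longrightarrow> cmod (p z) < 1"
  obtains m where "m holomorphic_on ball 0 1" "\<And>z. z \<in> ball 0 1 \<Longrightarrow> cmod (m z) \<le> 1"
    "deriv p 0 = m 0 * (1 - of_real (cmod (p 0))^2)"
    "(deriv^^2) p 0 = 2 * (1 - of_real (cmod (p 0))^2) * (deriv m 0 - cnj (p 0) * m 0 ^ 2)"
proof -
  define c where "c = p 0"
  have c1: "cmod c < 1" using lt[of 0] by (simp add: c_def)
  have den: "1 - cnj c * p z \<noteq> 0" if "z \<in> ball 0 1" for z
  proof
    assume "1 - cnj c * p z = 0"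
    then have "cnj c * p z = 1" by simp
    then have "cmod c * cmod (p z) = 1" by (metis complex_mod_cnj norm_mult norm_one)
    moreover have "cmod c * cmod (p z) < 1"
      using c1 lt[OF that] mult_strict_mono'[of "cmod c" 1 "cmod (p z)" 1] by simp
    ultimately show False by simp
  qed
  define M where "M z = (p z - c) / (1 - cnj c * p z)" for z
  have holM: "M holomorphic_on ball 0 1"
    unfolding M_def[abs_def] using den by (auto intro!: holomorphic_intros holp)
  have M0: "M 0 = 0" by (simp add: M_def c_def)
  have Mlt: "cmod (M z) < 1" if "z \<in> ball 0 1" for z
  proof -
    have "(cmod (1 - cnj c * p z))^2 - (cmod (p z - c))^2 > 0"
      unfolding moebius_ident using lt[OF that] c1
      by (simp add: abs_square_less_1 power_less_one_iff)
    then have "cmod (p z - c) < cmod (1 - cnj c * p z)"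
      by (smt (verit) norm_ge_zero power_mono)
    then show ?thesis using den[OF that] by (simp add: M_def norm_divide divide_less_eq)
  qed
  have Sch1: "cmod (M z) \<le> cmod z" if "z \<in> ball 0 1" for z
    using Schwarz_Lemma(1)[OF holM M0, of z] Mlt that by auto
  have Sch2: "cmod (deriv M 0) \<le> 1"
    using Schwarz_Lemma(2)[OF holM M0, of 0] Mlt by auto
  define m where "m = (\<lambda>z. if z = 0 then deriv M 0 else (M z - M 0) / (z - 0))"
  have holm: "m holomorphic_on ball 0 1"
    unfolding m_def by (rule pole_lemma[OF holM]) simp
  have mz: "m z = M z / z" if "z \<noteq> 0" for z using that M0 by (simp add: m_def)
  have mle: "cmod (m z) \<le> 1" if "z \<in> ball 0 1" for z
  proof (cases "z = 0")
    case True then show ?thesis using Sch2 by (simp add: m_def)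
  next
    case False then show ?thesis using Sch1[OF that] by (simp add: mz norm_divide divide_le_eq)
  qed
  define N where "N z = m z * (1 - cnj c * p z)" for z
  have holN: "N holomorphic_on ball 0 1" unfolding N_def[abs_def] by (auto intro!: holomorphic_intros holm holp)
  have pid: "p z = c + z * N z" if "z \<in> ball 0 1" for z
  proof (cases "z = 0")
    case True then show ?thesis by (simp add: c_def)
  next
    case False
    then show ?thesis using den[OF that] by (simp add: N_def mz M_def field_simps)
  qed
  have hd: "(deriv^^n) p 0 = (deriv^^n) (\<lambda>z. c + z * N z) 0" for n
    by (rule higher_deriv_transform_within_open[OF holp _ open_ball]) (auto intro!: holomorphic_intros holN pid)
  have hd2: "(deriv^^Suc n) (\<lambda>z. c + z * N z) 0 = (deriv^^Suc n) (\<lambda>z. z * N z) 0" for n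
    by (subst higher_deriv_add[of _ "ball 0 1"]) (auto intro!: holomorphic_intros holN)
  have ccnj: "cnj c * c = of_real (cmod c)^2" using complex_norm_square[of c] by (simp add: mult.commute)
  have N0: "N 0 = m 0 * (1 - of_real (cmod c)^2)" by (simp add: N_def c_def[symmetric] ccnj)
  have d1: "deriv p 0 = N 0"
    using hd[of 1] hd2[of 0] hd_zmult[OF holN, of 0] by simp
  have dN: "deriv N 0 = deriv m 0 * (1 - cnj c * c) + m 0 * (- cnj c * deriv p 0)"
  proof -
    have "(N has_field_derivative deriv m 0 * (1 - cnj c * p 0) + m 0 * (- cnj c * deriv p 0)) (at 0)"
      unfolding N_def[abs_def]
      by (auto intro!: derivative_eq_intros holomorphic_derivI[OF holm] holomorphic_derivI[OF holp])
    then show ?thesis by (simp add: DERIV_imp_deriv c_def)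
  qed
  have d2: "(deriv^^2) p 0 = 2 * deriv N 0"
    using hd[of 2] hd2[of 1] hd_zmult[OF holN, of 1] by (simp add: numeral_2_eq_2)
  show ?thesis
  proof (rule that[OF holm mle])
    show "deriv p 0 = m 0 * (1 - of_real (cmod (p 0))^2)" using d1 N0 by (simp add: c_def)
    show "(deriv^^2) p 0 = 2 * (1 - of_real (cmod (p 0))^2) * (deriv m 0 - cnj (p 0) * m 0 ^ 2)"
    proof -
      have "(deriv^^2) p 0 = 2 * (deriv m 0 * (1 - of_real (cmod c)^2) + m 0 * (- cnj c * (m 0 * (1 - of_real (cmod c)^2))))"
        using d2 dN d1 N0 ccnj by simp
      then show ?thesis by (simp add: c_def[symmetric] algebra_simps power2_eq_square)
    qed
  qed
qed



lemma limit_real: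
  fixes a b k :: real
  assumes k: "k > 0" and h: "\<And>t. 0 < t \<Longrightarrow> t < 1 \<Longrightarrow> t * a \<le> k * (1 - t^2 * b)"
  shows "a \<le> k * (1 - b)"
proof (rule ccontr)
  assume "\<not> ?thesis"
  then have pos: "a - k * (1 - b) > 0" by simp
  have "((\<lambda>t. t * a - k * (1 - t^2 * b)) \<longlongrightarrow> 1 * a - k * (1 - 1^2 * b)) (at_left 1)"
    by (intro tendsto_intros)
  then have "eventually (\<lambda>t. t * a - k * (1 - t^2 * b) > 0) (at_left (1::real))"
    using pos by (intro order_tendstoD(1)) auto
  moreover have "eventually (\<lambda>t. t \<in> {0<..<(1::real)}) (at_left 1)"
    by (rule eventually_at_left_real) simp
  ultimately have "eventually (\<lambda>t::real. False) (at_left 1)"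
    by eventually_elim (use h in force)
  then show False by simp
qed

lemma norm_one_minus_sq:
  assumes "x \<le> 1" "0 \<le> x"
  shows "cmod (1 - (complex_of_real x)^2) = 1 - x^2"
proof -
  have "cmod (1 - (complex_of_real x)^2) = cmod (complex_of_real (1 - x^2))" by simp
  also have "\<dots> = 1 - x^2" unfolding norm_of_real using assms by (simp add: power_le_one)
  finally show ?thesis .
qed

lemma first_strict:
  fixes p :: "complex \<Rightarrow> complex"
  assumes holp: "p holomorphic_on ball 0 1" and lt: "\<And>z. z \<in> ball 0 1 \<Longrightarrow> cmod (p z) < 1"
  shows "cmod (deriv p 0) \<le> 1 - (cmod (p 0))^2"
proof -
  obtain m where m: "m holomorphic_on ball 0 1" "\<And>z. z \<in> ball 0 1 \<Longrightarrow> cmod (m z) \<le> 1"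
    "deriv p 0 = m 0 * (1 - of_real (cmod (p 0))^2)"
    using wiener_strict[OF holp lt] by blast
  have c: "cmod (p 0) \<le> 1" using lt[of 0] by simp
  have "cmod (deriv p 0) = cmod (m 0) * (1 - (cmod (p 0))^2)"
    using m(3) norm_one_minus_sq[OF c norm_ge_zero] by (simp add: norm_mult)
  also have "\<dots> \<le> 1 * (1 - (cmod (p 0))^2)"
    using m(2)[of 0] c by (intro mult_right_mono) (auto simp: power_le_one)
  finally show ?thesis by simp
qed

lemma scaled:
  fixes p :: "complex \<Rightarrow> complex" and t :: real
  assumes holp: "p holomorphic_on ball 0 1" and le: "\<And>z. z \<in> ball 0 1 \<Longrightarrow> cmod (p z) \<le> 1"
    and t: "0 < t" "t < 1"
  shows "(\<lambda>z. of_real t * p z) holomorphic_on ball 0 1"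
    "\<And>z. z \<in> ball 0 1 \<Longrightarrow> cmod (of_real t * p z) < 1"
    "(deriv^^n) (\<lambda>z. of_real t * p z) 0 = of_real t * (deriv^^n) p 0"
proof -
  show "(\<lambda>z. of_real t * p z) holomorphic_on ball 0 1" by (intro holomorphic_intros holp)
  show "cmod (of_real t * p z) < 1" if "z \<in> ball 0 1" for z
  proof -
    have "cmod (of_real t * p z) = t * cmod (p z)" using t by (simp add: norm_mult)
    also have "\<dots> \<le> t * 1" using le[OF that] t by (intro mult_left_mono) auto
    finally show ?thesis using t by simp
  qed
  show "(deriv^^n) (\<lambda>z. of_real t * p z) 0 = of_real t * (deriv^^n) p 0"
    by (rule higher_deriv_cmult[OF holp]) auto
qed

lemma first_weak:
  fixes p :: "complex \<Rightarrow> complex"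
  assumes holp: "p holomorphic_on ball 0 1" and le: "\<And>z. z \<in> ball 0 1 \<Longrightarrow> cmod (p z) \<le> 1"
  shows "cmod (deriv p 0) \<le> 1 - (cmod (p 0))^2"
proof -
  have "t * cmod (deriv p 0) \<le> 1 * (1 - t^2 * (cmod (p 0))^2)" if t: "0 < t" "t < 1" for t
  proof -
    have "cmod ((deriv^^1) (\<lambda>z. of_real t * p z) 0) \<le> 1 - (cmod (of_real t * p 0))^2"
      using first_strict[OF scaled(1,2)[OF holp le t]] by simp
    then show ?thesis using scaled(3)[OF holp le t, of 1] t
      by (simp add: norm_mult power_mult_distrib)
  qed
  from limit_real[OF _ this] show ?thesis by simp
qed

lemma second_strict:
  fixes p :: "complex \<Rightarrow> complex"
  assumes holp: "p holomorphic_on ball 0 1" and lt: "\<And>z. z \<in> ball 0 1 \<Longrightarrow> cmod (p z) < 1"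
  shows "cmod ((deriv^^2) p 0) \<le> 2 * (1 - (cmod (p 0))^2)"
proof -
  obtain m where m: "m holomorphic_on ball 0 1" "\<And>z. z \<in> ball 0 1 \<Longrightarrow> cmod (m z) \<le> 1"
    "(deriv^^2) p 0 = 2 * (1 - of_real (cmod (p 0))^2) * (deriv m 0 - cnj (p 0) * m 0 ^ 2)"
    using wiener_strict[OF holp lt] by blast
  have c: "cmod (p 0) \<le> 1" using lt[of 0] by simp
  have m1: "cmod (deriv m 0) \<le> 1 - (cmod (m 0))^2" by (rule first_weak[OF m(1,2)])
  have "cmod (deriv m 0 - cnj (p 0) * m 0 ^ 2) \<le> cmod (deriv m 0) + cmod (p 0) * (cmod (m 0))^2"
    using norm_triangle_ineq4[of "deriv m 0" "cnj (p 0) * m 0 ^ 2"] by (simp add: norm_mult norm_power)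
  also have "\<dots> \<le> (1 - (cmod (m 0))^2) + 1 * (cmod (m 0))^2"
    using m1 c by (intro add_mono mult_right_mono) auto
  finally have le1: "cmod (deriv m 0 - cnj (p 0) * m 0 ^ 2) \<le> 1" by simp
  have "cmod ((deriv^^2) p 0) = 2 * (1 - (cmod (p 0))^2) * cmod (deriv m 0 - cnj (p 0) * m 0 ^ 2)"
    unfolding m(3) norm_mult norm_one_minus_sq[OF c norm_ge_zero] by simp
  also have "\<dots> \<le> 2 * (1 - (cmod (p 0))^2) * 1"
    using le1 c by (intro mult_left_mono) (auto simp: power_le_one)
  finally show ?thesis by simp
qed

lemma second_weak:
  fixes p :: "complex \<Rightarrow> complex"
  assumes holp: "p holomorphic_on ball 0 1" and le: "\<And>z. z \<in> ball 0 1 \<Longrightarrow> cmod (p z) \<le> 1"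
  shows "cmod ((deriv^^2) p 0) \<le> 2 * (1 - (cmod (p 0))^2)"
proof -
  have "t * cmod ((deriv^^2) p 0) \<le> 2 * (1 - t^2 * (cmod (p 0))^2)" if t: "0 < t" "t < 1" for t
  proof -
    have "cmod ((deriv^^2) (\<lambda>z. of_real t * p z) 0) \<le> 2 * (1 - (cmod (of_real t * p 0))^2)"
      using second_strict[OF scaled(1,2)[OF holp le t]] by simp
    then show ?thesis using scaled(3)[OF holp le t, of 2] t
      by (simp add: norm_mult power_mult_distrib)
  qed
  from limit_real[OF _ this] show ?thesis by simp
qed



lemma su_repr:
  assumes "Su_star f"
  obtains \<phi> where "\<phi> holomorphic_on ball 0 1" "\<And>z. z \<in> ball 0 1 \<Longrightarrow> cmod (\<phi> z) \<le> 1"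
    "(deriv^^2) f 0 = 2 * \<phi> 0"
    "(deriv^^3) f 0 = 3 * (deriv \<phi> 0 + \<phi> 0 ^ 2)"
    "(deriv^^4) f 0 = 4 * ((deriv^^2) \<phi> 0 + 3 * \<phi> 0 * deriv \<phi> 0 + \<phi> 0 ^ 3)"
proof -
  from assms have holf: "f holomorphic_on ball 0 1" and f0: "f 0 = 0" and df0: "deriv f 0 = 1"
    and cond: "\<And>z. z \<in> ball 0 1 \<Longrightarrow> z \<noteq> 0 \<Longrightarrow> cmod (z * deriv f z / f z - 1) < 1"
    unfolding Su_star_def by auto
  define q where "q = (\<lambda>z. if z = 0 then deriv f 0 else (f z - f 0) / (z - 0))"
  have holq: "q holomorphic_on ball 0 1" unfolding q_def by (rule pole_lemma[OF holf]) simp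
  have q0: "q 0 = 1" by (simp add: q_def df0)
  have fq: "f = (\<lambda>z. z * q z)" by (rule ext) (simp add: q_def f0)
  have fnz: "f z \<noteq> 0" if "z \<in> ball 0 1" "z \<noteq> 0" for z
    using cond[OF that] by auto
  have qnz: "q z \<noteq> 0" if "z \<in> ball 0 1" for z
    using fnz[OF that] q0 by (cases "z = 0") (auto simp: q_def f0)
  define \<phi> where "\<phi> z = deriv q z / q z" for z
  have hol\<phi>: "\<phi> holomorphic_on ball 0 1"
    unfolding \<phi>_def[abs_def] using qnz by (auto intro!: holomorphic_intros holomorphic_deriv holq)
  have dq: "deriv q z = \<phi> z * q z" if "z \<in> ball 0 1" for z using qnz[OF that] by (simp add: \<phi>_def)
  have Q: "(deriv^^Suc k) q 0 = (\<Sum>i = 0..k. of_nat (k choose i) * (deriv ^^ i) \<phi> 0 * (deriv ^^ (k-i)) q 0)" for k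
  proof -
    have "(deriv^^Suc k) q 0 = (deriv^^k) (deriv q) 0" by (simp add: funpow_Suc_right del: funpow.simps)
    also have "\<dots> = (deriv^^k) (\<lambda>z. \<phi> z * q z) 0"
      by (rule higher_deriv_transform_within_open[of _ "ball 0 1"])
        (auto intro!: holomorphic_intros holomorphic_deriv holq hol\<phi> dq)
    also have "\<dots> = (\<Sum>i = 0..k. of_nat (k choose i) * (deriv ^^ i) \<phi> 0 * (deriv ^^ (k-i)) q 0)"
      by (rule higher_deriv_mult[OF hol\<phi> holq]) auto
    finally show ?thesis .
  qed
  have Q1: "deriv q 0 = \<phi> 0" using Q[of 0] q0 by simp
  have Q2: "(deriv^^2) q 0 = deriv \<phi> 0 + \<phi> 0 ^ 2"
    using Q[of 1] q0 Q1 by (simp add: numeral_2_eq_2 power2_eq_square)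
  have Q3: "(deriv^^3) q 0 = (deriv^^2) \<phi> 0 + 3 * \<phi> 0 * deriv \<phi> 0 + \<phi> 0 ^ 3"
  proof -
    have "(deriv^^3) q 0 = (deriv^^Suc 2) q 0" by simp
    also have "\<dots> = \<phi> 0 * (deriv^^2) q 0 + 2 * deriv \<phi> 0 * deriv q 0 + (deriv^^2) \<phi> 0 * q 0"
      unfolding Q by (simp add: eval_nat_numeral)
    finally show ?thesis using Q1 Q2 q0 by (simp add: algebra_simps power2_eq_square power3_eq_cube)
  qed
  have F: "(deriv^^Suc n) f 0 = of_nat (Suc n) * (deriv^^n) q 0" for n
    unfolding fq by (rule hd_zmult[OF holq])
  define h where "h z = z * \<phi> z" for z
  have holh: "h holomorphic_on ball 0 1" unfolding h_def[abs_def] by (intro holomorphic_intros hol\<phi>)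
  have h0: "h 0 = 0" by (simp add: h_def)
  have hlt: "cmod (h z) < 1" if "norm z < 1" for z
  proof (cases "z = 0")
    case True then show ?thesis by (simp add: h_def)
  next
    case False
    have zb: "z \<in> ball 0 1" using that by simp
    have "((\<lambda>z. z * q z) has_field_derivative 1 * q z + z * deriv q z) (at z)"
      by (auto intro!: derivative_eq_intros holomorphic_derivI[OF holq] zb)
    then have dfl: "deriv (\<lambda>z. z * q z) z = q z + z * deriv q z" using DERIV_imp_deriv by fastforce
    have "z * deriv f z / f z - 1 = h z"
      using False qnz[OF zb] by (simp add: dfl fq h_def \<phi>_def field_simps)
    then show ?thesis using cond[OF zb False] by simp
  qed
  have le1: "cmod (\<phi> z) \<le> 1" if "z \<in> ball 0 1" for z
  proof (cases "z = 0")
    case True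
    have "(h has_field_derivative 1 * \<phi> 0 + 0 * deriv \<phi> 0) (at 0)"
      unfolding h_def[abs_def] by (auto intro!: derivative_eq_intros holomorphic_derivI[OF hol\<phi>])
    then have "deriv h 0 = \<phi> 0" by (simp add: DERIV_imp_deriv)
    then show ?thesis using Schwarz_Lemma(2)[OF holh h0 hlt, of 0] True by simp
  next
    case False
    have "cmod (h z) \<le> cmod z" using Schwarz_Lemma(1)[OF holh h0 hlt, of z] that by simp
    then show ?thesis using False by (simp add: h_def norm_mult)
  qed
  show ?thesis
  proof (rule that[OF hol\<phi> le1])
    show "(deriv^^2) f 0 = 2 * \<phi> 0" using F[of 1] Q1 by (simp add: numeral_2_eq_2)
    show "(deriv^^3) f 0 = 3 * (deriv \<phi> 0 + \<phi> 0 ^ 2)" using F[of 2] Q2 by (simp add: numeral_3_eq_3 numeral_2_eq_2)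
    show "(deriv^^4) f 0 = 4 * ((deriv^^2) \<phi> 0 + 3 * \<phi> 0 * deriv \<phi> 0 + \<phi> 0 ^ 3)"
      using F[of 3] Q3 by (simp add: eval_nat_numeral)
  qed
qed



lemma final_ineq:
  fixes c0 c1 c2 :: complex
  assumes h0: "cmod c0 \<le> 1" and h1: "cmod c1 \<le> 1 - (cmod c0)^2" and h2: "cmod c2 \<le> 1 - (cmod c0)^2"
  shows "cmod (c0 * c2 / 3 + 5/12 * c0^4 - c0^2 * c1 / 2 - c1^2 / 4) \<le> 5/12"
proof -
  define x where "x = cmod c0"
  have x0: "0 \<le> x" "x \<le> 1" using h0 by (auto simp: x_def)
  have s: "0 \<le> 1 - x^2" using x0 by (simp add: power_le_one)
  have "cmod (c0 * c2 / 3 + 5/12 * c0^4 - c0^2 * c1 / 2 - c1^2 / 4)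
      \<le> cmod (c0 * c2 / 3) + cmod (5/12 * c0^4) + cmod (c0^2 * c1 / 2) + cmod (c1^2 / 4)"
    by (smt (verit) norm_triangle_ineq4 norm_triangle_ineq)
  also have "\<dots> = x * cmod c2 / 3 + 5/12 * x^4 + x^2 * cmod c1 / 2 + (cmod c1)^2 / 4"
    by (simp add: x_def norm_mult norm_divide norm_power)
  also have "\<dots> \<le> x * (1 - x^2) / 3 + 5/12 * x^4 + x^2 * (1 - x^2) / 2 + (1 - x^2)^2 / 4"
    using h1 h2 x0 unfolding x_def[symmetric]
    by (intro add_mono divide_right_mono mult_left_mono power_mono order.refl) auto
  also have "\<dots> = 5/12 - (1 - x)^3 * (1 + x) / 6"
    by (simp add: field_simps power2_eq_square power3_eq_cube power4_eq_xxxx)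
  also have "\<dots> \<le> 5/12" using x0 by simp
  finally show ?thesis .
qed

lemma fact_vals: "(fact 2 :: complex) = 2" "(fact 3 :: complex) = 6" "(fact 4 :: complex) = 24"
  by (simp_all add: fact_numeral)

lemma H_formula:
  fixes f g :: "complex \<Rightarrow> complex"
  assumes holf: "f holomorphic_on ball 0 1" and f1: "deriv f 0 = 1" and li: "local_inverse f g r"
  shows "tcoeff g 2 * tcoeff g 4 - (tcoeff g 3)^2 =
    tcoeff f 2 * tcoeff f 4 - (tcoeff f 2)^2 * tcoeff f 3 + (tcoeff f 2)^4 - (tcoeff f 3)^2"
proof -
  note e = inverse_derivs[OF holf f1 li]
  define F2 where "F2 = (deriv^^2) f 0"
  define F3 where "F3 = (deriv^^3) f 0"
  define F4 where "F4 = (deriv^^4) f 0"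
  define G2 where "G2 = (deriv^^2) g 0"
  define G3 where "G3 = (deriv^^3) g 0"
  define G4 where "G4 = (deriv^^4) g 0"
  have g2: "G2 = - F2" using e(2) unfolding F2_def G2_def by (simp add: add_eq_0_iff)
  have g3: "G3 = - (F3 + 3 * F2 * G2)" using e(3) unfolding F2_def G2_def F3_def G3_def by (simp add: add_eq_0_iff)
  have g4: "G4 = - (F4 + 6 * F3 * G2 + 3 * F2 * G2^2 + 4 * F2 * G3)"
    using e(4) unfolding F2_def G2_def F3_def G3_def F4_def G4_def by (simp add: add_eq_0_iff)
  have "tcoeff g 2 * tcoeff g 4 - (tcoeff g 3)^2 = G2 / 2 * (G4 / 24) - (G3 / 6)^2"
    by (simp add: tcoeff_def fact_vals G2_def G3_def G4_def)
  also have "\<dots> = F2 / 2 * (F4 / 24) - (F2/2)^2 * (F3/6) + (F2/2)^4 - (F3/6)^2"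
    unfolding g4 g3 g2 by (simp add: field_simps power2_eq_square power4_eq_xxxx)
  also have "\<dots> = tcoeff f 2 * tcoeff f 4 - (tcoeff f 2)^2 * tcoeff f 3 + (tcoeff f 2)^4 - (tcoeff f 3)^2"
    by (simp add: tcoeff_def fact_vals F2_def F3_def F4_def)
  finally show ?thesis .
qed



lemma part1:
  assumes su: "Su_star f" and li: "local_inverse f g r"
  shows "cmod (tcoeff g 2 * tcoeff g 4 - (tcoeff g 3)\<^sup>2) \<le> 5 / 12"
proof -
  from su have holf: "f holomorphic_on ball 0 1" and df0: "deriv f 0 = 1" unfolding Su_star_def by auto
  obtain \<phi> where hol\<phi>: "\<phi> holomorphic_on ball 0 1" and le: "\<And>z. z \<in> ball 0 1 \<Longrightarrow> cmod (\<phi> z) \<le> 1"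
    and F2: "(deriv^^2) f 0 = 2 * \<phi> 0"
    and F3: "(deriv^^3) f 0 = 3 * (deriv \<phi> 0 + \<phi> 0 ^ 2)"
    and F4: "(deriv^^4) f 0 = 4 * ((deriv^^2) \<phi> 0 + 3 * \<phi> 0 * deriv \<phi> 0 + \<phi> 0 ^ 3)"
    using su_repr[OF su] by blast
  define c0 where "c0 = \<phi> 0"
  define c1 where "c1 = deriv \<phi> 0"
  define c2 where "c2 = (deriv^^2) \<phi> 0 / 2"
  have b0: "cmod c0 \<le> 1" using le[of 0] by (simp add: c0_def)
  have b1: "cmod c1 \<le> 1 - (cmod c0)^2" using first_weak[OF hol\<phi> le] by (simp add: c0_def c1_def)
  have b2: "cmod c2 \<le> 1 - (cmod c0)^2" using second_weak[OF hol\<phi> le] by (simp add: c0_def c2_def norm_divide)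
  have a2: "tcoeff f 2 = c0" by (simp add: tcoeff_def fact_vals F2 c0_def)
  have a3: "tcoeff f 3 = (c1 + c0^2) / 2" by (simp add: tcoeff_def fact_vals F3 c0_def c1_def)
  have a4: "tcoeff f 4 = (2 * c2 + 3 * c0 * c1 + c0^3) / 6" by (simp add: tcoeff_def fact_vals F4 c0_def c1_def c2_def)
  have "tcoeff g 2 * tcoeff g 4 - (tcoeff g 3)\<^sup>2 = c0 * c2 / 3 + 5/12 * c0^4 - c0^2 * c1 / 2 - c1^2 / 4"
    unfolding H_formula[OF holf df0 li] a2 a3 a4
    by (simp add: field_simps power2_eq_square power3_eq_cube power4_eq_xxxx)
  then show ?thesis using final_ineq[OF b0 b1 b2] by simp
qed



lemma hd_zexp: "(deriv^^n) (\<lambda>z. z * exp z) = (\<lambda>z::complex. (z + of_nat n) * exp z)"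
proof (induction n)
  case 0 then show ?case by simp
next
  case (Suc n)
  have "(deriv^^Suc n) (\<lambda>z. z * exp z) = deriv (\<lambda>z::complex. (z + of_nat n) * exp z)"
    using Suc by simp
  also have "\<dots> = (\<lambda>z::complex. (z + of_nat (Suc n)) * exp z)"
  proof
    fix z :: complex
    have "((\<lambda>z::complex. (z + of_nat n) * exp z) has_field_derivative (1 + 0) * exp z + (z + of_nat n) * exp z) (at z)"
      by (auto intro!: derivative_eq_intros)
    then show "deriv (\<lambda>z::complex. (z + of_nat n) * exp z) z = (z + of_nat (Suc n)) * exp z"
      by (auto dest!: DERIV_imp_deriv simp: algebra_simps)
  qed
  finally show ?case .
qed

lemma part2:
  "\<exists>f g r. Su_star f \<and> local_inverse f g r \<and>
            cmod (tcoeff g 2 * tcoeff g 4 - (tcoeff g 3)\<^sup>2) = 5 / 12"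
proof -
  define f where "f = (\<lambda>z::complex. z * exp z)"
  have holf: "f holomorphic_on ball 0 1" unfolding f_def by (intro holomorphic_intros)
  have hd: "(deriv^^n) f z = (z + of_nat n) * exp z" for n z unfolding f_def hd_zexp by simp
  have d1: "deriv f z = (z + 1) * exp z" for z using hd[of 1 z] by simp
  have su: "Su_star f"
    unfolding Su_star_def
  proof (intro conjI ballI impI holf)
    show "f 0 = 0" by (simp add: f_def)
    show "deriv f 0 = 1" by (simp add: d1)
    fix z :: complex assume z: "z \<in> ball 0 1" "z \<noteq> 0"
    have "z * deriv f z / f z - 1 = z" using z(2) by (simp only: d1) (simp add: f_def field_simps)
    then show "cmod (z * deriv f z / f z - 1) < 1" using z(1) by simp
  qed
  have df0: "deriv f 0 \<noteq> 0" by (simp add: d1)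
  obtain \<rho> where \<rho>: "\<rho> > 0" "ball (0::complex) \<rho> \<subseteq> ball 0 1" "open (f ` ball 0 \<rho>)" "inj_on f (ball 0 \<rho>)"
    by (rule has_complex_derivative_locally_invertible[OF holf _ open_ball df0]) auto
  have holf': "f holomorphic_on ball 0 \<rho>" using holf \<rho>(2) holomorphic_on_subset by blast
  obtain g where holg: "g holomorphic_on (f ` ball 0 \<rho>)" and gf: "\<And>z. z \<in> ball 0 \<rho> \<Longrightarrow> g (f z) = z"
    using holomorphic_has_inverse[OF holf' open_ball \<rho>(4)] by metis
  have f0: "f 0 = 0" by (simp add: f_def)
  have "0 \<in> f ` ball 0 \<rho>" using \<rho>(1) f0 by (metis centre_in_ball imageI)
  then obtain r where r: "r > 0" "ball 0 r \<subseteq> f ` ball 0 \<rho>"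
    using \<rho>(3) open_contains_ball by blast
  have li: "local_inverse f g r"
    unfolding local_inverse_def
  proof (intro conjI ballI)
    show "r > 0" by fact
    show "g holomorphic_on ball 0 r" using holg r(2) holomorphic_on_subset by blast
    show "g 0 = 0" using gf[of 0] \<rho>(1) f0 by simp
    show "g ` ball 0 r \<subseteq> ball 0 1"
    proof
      fix y assume "y \<in> g ` ball 0 r"
      then obtain w where w: "w \<in> ball 0 r" "y = g w" by blast
      then obtain z where z: "z \<in> ball 0 \<rho>" "w = f z" using r(2) by blast
      then show "y \<in> ball 0 1" using w gf \<rho>(2) by auto
    qed
    fix w :: complex assume "w \<in> ball 0 r"
    then obtain z where z: "z \<in> ball 0 \<rho>" "w = f z" using r(2) by blast
    then show "f (g w) = w" using gf by simp
  qed
  have t2: "tcoeff f 2 = 1" by (simp add: tcoeff_def hd fact_vals)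
  have t3: "tcoeff f 3 = 1/2" by (simp add: tcoeff_def hd fact_vals)
  have t4: "tcoeff f 4 = 1/6" by (simp add: tcoeff_def hd fact_vals)
  have "tcoeff g 2 * tcoeff g 4 - (tcoeff g 3)\<^sup>2 = 5/12"
  proof -
    have df1: "deriv f 0 = 1" by (simp add: d1)
    show ?thesis unfolding H_formula[OF holf df1 li] t2 t3 t4 by (simp add: power2_eq_square)
  qed
  then have "cmod (tcoeff g 2 * tcoeff g 4 - (tcoeff g 3)\<^sup>2) = cmod (5/12 :: complex)" by (simp only:)
  then have "cmod (tcoeff g 2 * tcoeff g 4 - (tcoeff g 3)\<^sup>2) = 5/12" by (simp add: norm_divide)
  with su li show ?thesis by blast
qed


theorem mainTheorem4:
  shows "(\<forall>f g r. Su_star f \<and> local_inverse f g r \<longrightarrow>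
            cmod (tcoeff g 2 * tcoeff g 4 - (tcoeff g 3)\<^sup>2) \<le> 5 / 12)
       \<and> (\<exists>f g r. Su_star f \<and> local_inverse f g r \<and>
            cmod (tcoeff g 2 * tcoeff g 4 - (tcoeff g 3)\<^sup>2) = 5 / 12)"
  using part1 part2 by blast

end
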